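(* Let $D$ be an integral domain with quotient field $K$ and $n\ge1$. Let $$\mathrm{Int}_K(M_n(D))=\{f\in K[x]\mid f(C)\in M_n(D)\ \forall C\in M_n(D)\},$$ $$\mathrm{Int}_K[M_n(D)]=\{f\in (M_n(K))[x]\mid f(C)\in M_n(D)\ \forall C\in M_n(D)\}.$$ Identify $(M_n(K))[x]$ with $M_n(K[x])$ via the ring isomorphism $\varphi\big(\sum_k (a^{(k)}_{ij})_{i,j}\,x^k\big)=\big(\sum_k a^{(k)}_{ij}x^k\big)_{i,j}$. Then $\varphi(\mathrm{Int}_K[M_n(D)])=M_n(\mathrm{Int}_K(M_n(D)))$.
   Context: For $f=\sum_k A_k x^k\in (M_n(K))[x]$ and $C\in M_n(D)$, $f(C)=\sum_k A_kC^k$ (coefficients written on the left). $\mathrm{Int}_K[M_n(D)]$ is a ring (closed under multiplication) lying between $(M_n(D))[x]$ and $(M_n(K))[x]$. *)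

theory Defs
  imports "HOL-Analysis.Analysis" "HOL-Computational_Algebra.Fraction_Field"
    "HOL-Computational_Algebra.Polynomial"
begin

text \<open>D is an integral domain (a type of class idom), K = 'a fract its quotient field,
  D embedded in K via d \<mapsto> Fract d 1.  n x n matrices are 'b^'n^'n with 'n a finite type
  (so n = CARD('n) \<ge> 1).\<close>

definition matpow :: "'b::semiring_1^'n::finite^'n \<Rightarrow> nat \<Rightarrow> 'b^'n^'n" where
  "matpow C k = (((**) C) ^^ k) (mat 1)"

definition Dmats :: "('a::idom fract^'n^'n) set" where
  "Dmats = {C. \<forall>i j. C $ i $ j \<in> range (\<lambda>d. Fract d 1)}"

definition eval_scalar_poly :: "'b::field poly \<Rightarrow> 'b^'n^'n \<Rightarrow> 'b^'n^'n" where
  "eval_scalar_poly f C = (\<Sum>k\<le>degree f. mat (coeff f k) ** matpow C k) "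

definition eval_mat_poly :: "('b::field^'n^'n) poly \<Rightarrow> 'b^'n^'n \<Rightarrow> 'b^'n^'n" where
  "eval_mat_poly f C = (\<Sum>k\<le>degree f. coeff f k ** matpow C k)"

definition IntK_Mn :: "'n::finite itself \<Rightarrow> 'a::idom fract poly set" where
  "IntK_Mn _ = {f. \<forall>C::'a fract^'n^'n. C \<in> Dmats \<longrightarrow> eval_scalar_poly f C \<in> Dmats}"

definition IntK_bracket_Mn :: "('a::idom fract^'n^'n) poly set" where
  "IntK_bracket_Mn = {f. \<forall>C. C \<in> Dmats \<longrightarrow> eval_mat_poly f C \<in> Dmats}"

definition phi :: "('b::zero^'n^'n) poly \<Rightarrow> ('b poly)^'n^'n" where
  "phi f = (\<chi> i j. Poly (map (\<lambda>k. coeff f k $ i $ j) [0..<Suc (degree f)]))"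

end

theory Submission imports Defs begin

definition inD :: "'a::idom fract \<Rightarrow> bool" where "inD x \<longleftrightarrow> x \<in> range (\<lambda>d. Fract d 1)"

lemma inD_0[simp]: "inD 0" unfolding inD_def by (rule image_eqI[of _ _ 0]) (auto simp: Zero_fract_def)
lemma inD_1[simp]: "inD 1" unfolding inD_def by (rule image_eqI[of _ _ 1]) (auto simp: One_fract_def)
lemma inD_add[intro]: "inD x \<Longrightarrow> inD y \<Longrightarrow> inD (x+y)"
  unfolding inD_def by (auto intro!: image_eqI[of _ _ "_ + _"])
lemma inD_mult[intro]: "inD x \<Longrightarrow> inD y \<Longrightarrow> inD (x*y)"
  unfolding inD_def by (auto intro!: image_eqI[of _ _ "_ * _"])
lemma inD_uminus[intro]: "inD x \<Longrightarrow> inD (-x)"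
  unfolding inD_def by (auto intro!: image_eqI[of _ _ "- _"])
lemma inD_diff[intro]: "inD x \<Longrightarrow> inD y \<Longrightarrow> inD (x-y)"
  unfolding inD_def by (auto intro!: image_eqI[of _ _ "_ - _"])
lemma inD_sum[intro]: "(\<And>i. i \<in> A \<Longrightarrow> inD (f i)) \<Longrightarrow> inD (sum f A)"
  by (induction A rule: infinite_finite_induct) auto
lemma inD_if[intro]: "inD x \<Longrightarrow> inD y \<Longrightarrow> inD (if P then x else y)" by auto

lemma Dmats_iff: "C \<in> Dmats \<longleftrightarrow> (\<forall>i j. inD (C$i$j))" unfolding Dmats_def inD_def by auto

lemma Dmats_mult: "A \<in> Dmats \<Longrightarrow> B \<in> Dmats \<Longrightarrow> A ** B \<in> Dmats"
  unfolding Dmats_iff matrix_matrix_mult_def by (auto intro!: inD_sum inD_mult)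

lemma matpow_0[simp]: "matpow C 0 = mat 1" by (simp add: matpow_def)
lemma matpow_Suc: "matpow C (Suc k) = C ** matpow C k" by (simp add: matpow_def)

lemma matpow_conj:
  fixes U U' C :: "'b::comm_ring_1^'n::finite^'n"
  assumes "U ** U' = mat 1" "U' ** U = mat 1"
  shows "matpow (U ** C ** U') k = U ** matpow C k ** U'"
proof (induction k)
  case 0 then show ?case using assms by simp
next
  case (Suc k)
  have "matpow (U ** C ** U') (Suc k) = U ** C ** (U' ** U) ** matpow C k ** U'"
    by (simp add: matpow_Suc Suc matrix_mul_assoc)
  also have "\<dots> = U ** matpow C (Suc k) ** U'" using assms by (simp add: matpow_Suc matrix_mul_assoc)
  finally show ?case .
qed

lemma coeff_phi: "coeff (phi f $ i $ j) k = coeff f k $ i $ j"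
  unfolding phi_def by (auto simp: nth_default_def coeff_eq_0 not_less simp del: upt_Suc)

lemma degree_phi: "degree (phi f $ i $ j) \<le> degree f"
  by (rule degree_le) (auto simp: coeff_phi coeff_eq_0)

lemma matrix_add_rdistrib: "((B + C) ** A) = (B ** A) + (C ** A)"
  by (vector matrix_matrix_mult_def sum.distrib[symmetric] field_simps)

lemma matrix_sum_rmult: "(sum f S) ** (B::'b::semiring_1^'n::finite^'n) = sum (\<lambda>k. f k ** B) S"
  by (induction S rule: infinite_finite_induct) (auto simp: matrix_add_rdistrib)

lemma mat_mult_entry: "(mat c ** (M::'b::semiring_1^'n::finite^'n))$i$j = c * M$i$j"
  unfolding matrix_matrix_mult_def mat_def
  by (auto simp: if_distrib if_distribR sum.delta'[OF finite] cong: if_cong)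

definition Emat :: "'n \<Rightarrow> 'n \<Rightarrow> 'b::semiring_1^'n::finite^'n" where
  "Emat b c = (\<chi> i j. if i = b \<and> j = c then 1 else 0)"

lemma Emat_entry: "(X ** Emat b c ** (Y::'b::semiring_1^'n::finite^'n))$a$j = X$a$b * Y$c$j"
proof -
  have 1: "(X ** Emat b c) $ a $ k = (if k = c then X$a$b else 0)" for k
    unfolding matrix_matrix_mult_def Emat_def
    by (auto simp: if_distrib if_distribR sum.delta'[OF finite] cong: if_cong)
  show ?thesis
    by (subst matrix_matrix_mult_def) (simp add: 1 if_distrib if_distribR sum.delta'[OF finite] cong: if_cong)
qed

lemma eval_mat_poly_ext: "degree f \<le> N \<Longrightarrow> eval_mat_poly f C = (\<Sum>k\<le>N. coeff f k ** matpow C k)"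
  unfolding eval_mat_poly_def
  by (rule sum.mono_neutral_left) (auto simp: coeff_eq_0)

lemma eval_scalar_poly_ext: "degree f \<le> N \<Longrightarrow> eval_scalar_poly f C = (\<Sum>k\<le>N. mat (coeff f k) ** matpow C k)"
  unfolding eval_scalar_poly_def
  by (rule sum.mono_neutral_left) (auto simp: coeff_eq_0)

lemma eval_scalar_phi_entry:
  "(eval_scalar_poly (phi f $ a $ b) C) $ c $ j = (\<Sum>k\<le>degree f. coeff f k $ a $ b * matpow C k $ c $ j)"
  by (simp add: eval_scalar_poly_ext[OF degree_phi] sum_component mat_mult_entry coeff_phi)

lemma eval_mat_entry:
  "(eval_mat_poly f C) $ a $ j = (\<Sum>b\<in>UNIV. (eval_scalar_poly (phi f $ a $ b) C) $ b $ j)"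
  by (simp add: eval_scalar_phi_entry eval_mat_poly_def sum_component matrix_matrix_mult_def
      sum_distrib_right sum.swap[of _ UNIV])

lemma matrix_diff_ldistrib: "(A ** (B - C)) = (A ** B) - (A ** (C::'b::ring_1^'n::finite^'n))"
  by (simp add: vec_eq_iff matrix_matrix_mult_def sum_subtractf[symmetric] right_diff_distrib)
lemma matrix_diff_rdistrib: "((B - C) ** A) = (B ** A) - (C ** (A::'b::ring_1^'n::finite^'n))"
  by (simp add: vec_eq_iff matrix_matrix_mult_def sum_subtractf[symmetric] left_diff_distrib)

lemma Dmats_mat1: "(mat 1 :: 'a::idom fract^'n::finite^'n) \<in> Dmats"
  by (auto simp: Dmats_iff mat_def)

lemma Dmats_Emat: "(Emat b c :: 'a::idom fract^'n::finite^'n) \<in> Dmats"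
  by (auto simp: Dmats_iff Emat_def)

lemma Dmats_add: "A \<in> Dmats \<Longrightarrow> B \<in> Dmats \<Longrightarrow> A + B \<in> Dmats"
  by (auto simp: Dmats_iff)
lemma Dmats_diff: "A \<in> Dmats \<Longrightarrow> B \<in> Dmats \<Longrightarrow> A - B \<in> Dmats"
  by (auto simp: Dmats_iff)

lemma Emat_sq: "b \<noteq> c \<Longrightarrow> Emat b c ** Emat b c = (0::'b::semiring_1^'n::finite^'n)"
proof -
  assume bc: "b \<noteq> c"
  have "(mat 1 ** Emat b c ** Emat b c :: 'b^'n^'n) $ i $ j = 0" for i j
    by (subst Emat_entry) (use bc in \<open>auto simp: Emat_def\<close>)
  then show ?thesis by (simp add: vec_eq_iff)
qed

lemma offdiag:
  fixes f :: "('a::idom fract^'n::finite^'n) poly"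
  assumes f: "f \<in> IntK_bracket_Mn" and C: "C \<in> Dmats" and bc: "b \<noteq> c"
  shows "inD ((eval_scalar_poly (phi f $ a $ b) C) $ c $ j)"
proof -
  define E :: "'a fract^'n^'n" where "E = Emat b c"
  define U where "U = mat 1 + E"
  define U' where "U' = mat 1 - E"
  have EE: "E ** E = 0" unfolding E_def using bc by (rule Emat_sq)
  have UU': "U ** U' = mat 1" unfolding U_def U'_def
    by (simp add: matrix_diff_ldistrib matrix_add_rdistrib EE)
  have U'U: "U' ** U = mat 1" unfolding U_def U'_def
    by (simp add: matrix_add_ldistrib matrix_diff_rdistrib EE)
  have UD: "U \<in> Dmats" "U' \<in> Dmats" unfolding U_def U'_def E_def
    by (auto intro!: Dmats_add Dmats_diff Dmats_mat1 Dmats_Emat)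
  have CD: "U ** C ** U' \<in> Dmats" using UD C by (auto intro!: Dmats_mult)
  have ev1: "eval_mat_poly f (U ** C ** U') \<in> Dmats" using f CD by (auto simp: IntK_bracket_Mn_def)
  have ev0: "eval_mat_poly f C \<in> Dmats" using f C by (auto simp: IntK_bracket_Mn_def)
  have trm: "coeff f k ** matpow (U ** C ** U') k ** U = coeff f k ** matpow C k + coeff f k ** E ** matpow C k" for k
  proof -
    have "coeff f k ** matpow (U ** C ** U') k ** U = coeff f k ** U ** matpow C k ** (U' ** U)"
      by (simp add: matpow_conj[OF UU' U'U] matrix_mul_assoc)
    also have "\<dots> = coeff f k ** U ** matpow C k" by (simp add: U'U)
    also have "\<dots> = coeff f k ** matpow C k + coeff f k ** E ** matpow C k"
      unfolding U_def by (simp add: matrix_add_ldistrib matrix_add_rdistrib)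
    finally show ?thesis .
  qed
  have key: "eval_mat_poly f (U ** C ** U') ** U = eval_mat_poly f C + (\<Sum>k\<le>degree f. coeff f k ** E ** matpow C k)"
    unfolding eval_mat_poly_def by (simp add: matrix_sum_rmult trm sum.distrib)
  have "(eval_mat_poly f (U ** C ** U') ** U) $ a $ j = (eval_mat_poly f C) $ a $ j + (eval_scalar_poly (phi f $ a $ b) C) $ c $ j"
    unfolding key eval_scalar_phi_entry by (simp add: sum_component E_def Emat_entry)
  then have eq: "(eval_scalar_poly (phi f $ a $ b) C) $ c $ j = (eval_mat_poly f (U ** C ** U') ** U) $ a $ j - (eval_mat_poly f C) $ a $ j"
    by simp
  have "eval_mat_poly f (U ** C ** U') ** U \<in> Dmats" using ev1 UD by (auto intro: Dmats_mult)
  then show ?thesis unfolding eq using ev0 by (auto simp: Dmats_iff)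
qed

lemma perm_entry:
  fixes t :: "'n::finite \<Rightarrow> 'n" and X :: "'b::semiring_1^'n^'n"
  assumes tt: "\<And>i. t (t i) = i"
  defines "P \<equiv> (\<chi> i l. if l = t i then 1 else 0) :: 'b^'n^'n"
  shows "(P ** X ** P) $ i $ j = X $ (t i) $ (t j)"
proof -
  have 1: "(P ** X) $ i $ k = X $ (t i) $ k" for k
    unfolding matrix_matrix_mult_def P_def
    by (auto simp: if_distrib if_distribR sum.delta'[OF finite] cong: if_cong)
  have 2: "(j = t l) = (l = t j)" for l j using tt by metis
  have 3: "(Y ** P) $ i $ j = Y $ i $ (t j)" for Y :: "'b^'n^'n" and i j
    unfolding matrix_matrix_mult_def P_def
    by (simp add: 2 if_distrib if_distribR sum.delta'[OF finite] cong: if_cong)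
  show ?thesis by (simp only: 3 1)
qed

lemma perm_sq:
  fixes t :: "'n::finite \<Rightarrow> 'n"
  assumes tt: "\<And>i. t (t i) = i"
  defines "P \<equiv> (\<chi> i l. if l = t i then 1 else 0) :: 'b::semiring_1^'n^'n"
  shows "P ** P = mat 1"
proof -
  have "(P ** mat 1 ** P) $ i $ j = mat 1 $ i $ j" for i j
    unfolding P_def by (subst perm_entry[OF tt]) (auto simp: mat_def tt, metis tt)
  then show ?thesis by (simp add: vec_eq_iff)
qed

lemma allentries:
  fixes f :: "('a::idom fract^'n::finite^'n) poly" and C :: "'a fract^'n^'n"
  assumes f: "f \<in> IntK_bracket_Mn" and C: "C \<in> Dmats"
  shows "inD ((eval_scalar_poly (phi f $ a $ b) C) $ c $ j)"
proof (cases "b = c")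
  case False then show ?thesis using offdiag[OF f C] by blast
next
  case True
  show ?thesis
  proof (cases "\<exists>v::'n. v \<noteq> b")
    case False
    then have U: "UNIV = {b}" by auto
    have "eval_mat_poly f C \<in> Dmats" using f C by (auto simp: IntK_bracket_Mn_def)
    then have "inD ((eval_mat_poly f C) $ a $ j)" by (auto simp: Dmats_iff)
    moreover have "c = b" "j = b" using False True by blast+
    ultimately show ?thesis by (simp add: eval_mat_entry U)
  next
    case ex: True
    then obtain v where vb: "v \<noteq> b" by auto
    define t where "t = (\<lambda>i. if i = b then v else if i = v then b else i)"
    have tt: "\<And>i. t (t i) = i" unfolding t_def by auto
    define P :: "'a fract^'n^'n" where "P = (\<chi> i l. if l = t i then 1 else 0)"
    have PP: "P ** P = mat 1" unfolding P_def by (rule perm_sq[OF tt])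
    have PD: "P \<in> Dmats" by (auto simp: P_def Dmats_iff)
    have CD: "P ** C ** P \<in> Dmats" using PD C by (auto intro!: Dmats_mult)
    have pe: "(P ** X ** P) $ x $ y = X $ (t x) $ (t y)" for X x y
      unfolding P_def by (rule perm_entry[OF tt])
    have conj: "(eval_scalar_poly g (P ** C ** P)) $ x $ y = (eval_scalar_poly g C) $ (t x) $ (t y)" for g x y
      by (simp add: eval_scalar_poly_def sum_component mat_mult_entry matpow_conj[OF PP PP]
          pe)
    have "inD ((eval_scalar_poly (phi f $ a $ b) (P ** C ** P)) $ v $ (t j))"
      using offdiag[OF f CD, of b v a "t j"] vb by auto
    moreover have "t v = b" unfolding t_def using vb by auto
    ultimately show ?thesis using True by (simp add: conj tt)
  qed
qed

theorem mainTheorem7: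
  shows "phi ` (IntK_bracket_Mn :: ('a::idom fract^'n::finite^'n) poly set)
     = {M. \<forall>i j. M $ i $ j \<in> IntK_Mn TYPE('n)}"
proof
  show "phi ` (IntK_bracket_Mn :: ('a::idom fract^'n::finite^'n) poly set) \<subseteq> {M. \<forall>i j. M $ i $ j \<in> IntK_Mn TYPE('n)}"
    using allentries by (fastforce simp: IntK_Mn_def Dmats_iff)
next
  show "{M. \<forall>i j. M $ i $ j \<in> IntK_Mn TYPE('n)} \<subseteq> phi ` (IntK_bracket_Mn :: ('a::idom fract^'n::finite^'n) poly set)"
  proof
    fix M :: "'a fract poly ^'n^'n"
    assume "M \<in> {M. \<forall>i j. M $ i $ j \<in> IntK_Mn TYPE('n)}"
    then have MI: "\<And>i j. M $ i $ j \<in> IntK_Mn TYPE('n)" by auto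
    define N where "N = Max (range (\<lambda>(i,j). degree (M$i$j)))"
    have degN: "degree (M$i$j) \<le> N" for i j
      unfolding N_def by (rule Max_ge) (auto intro!: image_eqI[of _ _ "(i,j)"])
    define f :: "('a fract^'n^'n) poly" where
      "f = Poly (map (\<lambda>k. \<chi> i j. coeff (M$i$j) k) [0..<Suc N])"
    have cf: "coeff f k = (\<chi> i j. coeff (M$i$j) k)" for k
    proof (cases "k < Suc N")
      case True then show ?thesis by (simp add: f_def nth_default_def del: upt_Suc)
    next
      case False
      then have "coeff (M$i$j) k = 0" for i j using degN[of i j] by (auto intro!: coeff_eq_0)
      then show ?thesis using False by (simp add: f_def nth_default_def vec_eq_iff del: upt_Suc)
    qed
    have phif: "phi f = M" by (simp add: vec_eq_iff poly_eq_iff coeff_phi cf)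
    have "f \<in> IntK_bracket_Mn"
      unfolding IntK_bracket_Mn_def
    proof (safe)
      fix C :: "'a fract^'n^'n" assume C: "C \<in> Dmats"
      show "eval_mat_poly f C \<in> Dmats"
        unfolding Dmats_iff
      proof (intro allI)
        fix a j
        show "inD (eval_mat_poly f C $ a $ j)"
          unfolding eval_mat_entry phif
          using MI C by (auto simp: IntK_Mn_def Dmats_iff intro!: inD_sum)
      qed
    qed
    then show "M \<in> phi ` IntK_bracket_Mn" using phif by blast
  qed
qed

end
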